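(* Let $D$ be a non-commutative division ring with center $F$ and let $M$ be an irreducible locally solvable maximal subgroup of $D^*$. If $M$ is metabelian, then: (i) $M$ contains a unique maximal abelian normal subgroup $A$, and it satisfies $F^*\subsetneq A$ and $M'\le A$; (ii) $K=A\cup\{0\}$ is a maximal subfield of $D$.
   Context: $D^*$ is the multiplicative group of $D$; maximal subgroup = proper subgroup maximal among proper subgroups. A subgroup $G\le D^*$ is irreducible if the division subring $F(G)$ generated by $F\cup G$ equals $D$. Locally solvable: every finitely generated subgroup solvable. Metabelian: the derived subgroup $M'$ is abelian. A maximal abelian normal subgroup is an abelian normal subgroup not properly contained in another abelian normal subgroup. *)

theory Defs
  imports Main
begin

definition center :: "'a::division_ring set" where
  "center = {x. \<forall>y. x * y = y * x}"

definition mult_subgroup :: "'a::division_ring set \<Rightarrow> bool" where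
  "mult_subgroup G \<longleftrightarrow> G \<subseteq> - {0} \<and> 1 \<in> G \<and> (\<forall>x\<in>G. \<forall>y\<in>G. x * y \<in> G)
     \<and> (\<forall>x\<in>G. inverse x \<in> G)"

definition maximal_subgroup :: "'a::division_ring set \<Rightarrow> bool" where
  "maximal_subgroup M \<longleftrightarrow> mult_subgroup M \<and> M \<noteq> - {0} \<and>
     (\<forall>H. mult_subgroup H \<and> M \<subseteq> H \<and> H \<noteq> - {0} \<longrightarrow> H = M)"

definition division_subring :: "'a::division_ring set \<Rightarrow> bool" where
  "division_subring S \<longleftrightarrow> 0 \<in> S \<and> 1 \<in> S \<and> (\<forall>x\<in>S. \<forall>y\<in>S. x + y \<in> S \<and> x * y \<in> S)
     \<and> (\<forall>x\<in>S. - x \<in> S \<and> inverse x \<in> S)"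

definition division_subring_gen :: "'a::division_ring set \<Rightarrow> 'a set" where
  "division_subring_gen X = \<Inter> {S. division_subring S \<and> X \<subseteq> S}"

definition irreducible_subgroup :: "'a::division_ring set \<Rightarrow> bool" where
  "irreducible_subgroup G \<longleftrightarrow> division_subring_gen (center \<union> G) = UNIV"

definition subgroup_gen :: "'a::division_ring set \<Rightarrow> 'a set" where
  "subgroup_gen X = \<Inter> {H. mult_subgroup H \<and> X \<subseteq> H}"

definition commutator :: "'a::division_ring \<Rightarrow> 'a \<Rightarrow> 'a" where
  "commutator x y = inverse x * inverse y * x * y"

definition derived :: "'a::division_ring set \<Rightarrow> 'a set" where
  "derived H = subgroup_gen {commutator x y | x y. x \<in> H \<and> y \<in> H}"

definition solvable_subgroup :: "'a::division_ring set \<Rightarrow> bool" where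
  "solvable_subgroup H \<longleftrightarrow> (\<exists>n. (derived ^^ n) H = {1})"

definition locally_solvable :: "'a::division_ring set \<Rightarrow> bool" where
  "locally_solvable G \<longleftrightarrow> (\<forall>X. finite X \<and> X \<subseteq> G \<longrightarrow> solvable_subgroup (subgroup_gen X))"

definition abelian_set :: "'a::division_ring set \<Rightarrow> bool" where
  "abelian_set A \<longleftrightarrow> (\<forall>x\<in>A. \<forall>y\<in>A. x * y = y * x)"

definition metabelian :: "'a::division_ring set \<Rightarrow> bool" where
  "metabelian M \<longleftrightarrow> abelian_set (derived M)"

definition normal_subgroup :: "'a::division_ring set \<Rightarrow> 'a set \<Rightarrow> bool" where
  "normal_subgroup N M \<longleftrightarrow> mult_subgroup N \<and> N \<subseteq> M \<and>
     (\<forall>m\<in>M. \<forall>n\<in>N. inverse m * n * m \<in> N)"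

definition abelian_normal :: "'a::division_ring set \<Rightarrow> 'a set \<Rightarrow> bool" where
  "abelian_normal A M \<longleftrightarrow> normal_subgroup A M \<and> abelian_set A"

definition maximal_abelian_normal :: "'a::division_ring set \<Rightarrow> 'a set \<Rightarrow> bool" where
  "maximal_abelian_normal A M \<longleftrightarrow> abelian_normal A M \<and>
     (\<forall>B. abelian_normal B M \<and> A \<subseteq> B \<longrightarrow> B = A)"

definition subfield :: "'a::division_ring set \<Rightarrow> bool" where
  "subfield K \<longleftrightarrow> division_subring K \<and> abelian_set K"

definition maximal_subfield :: "'a::division_ring set \<Rightarrow> bool" where
  "maximal_subfield K \<longleftrightarrow> subfield K \<and> (\<forall>L. subfield L \<and> K \<subseteq> L \<longrightarrow> L = K)"

end

theory Submission
  imports Defs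
begin

lemma Inter_div:
  assumes F: "\<And>H. H \<in> F \<Longrightarrow> division_subring (H::'a::division_ring set)"
  shows "division_subring (\<Inter> F)"
  unfolding division_subring_def
proof (intro conjI ballI)
  show "0 \<in> \<Inter> F" using F unfolding division_subring_def by blast
  show "1 \<in> \<Inter> F" using F unfolding division_subring_def by blast
  fix x assume x: "x \<in> \<Inter> F"
  show "inverse x \<in> \<Inter> F"
  proof
    fix H assume "H \<in> F" then show "inverse x \<in> H" using F[of H] x unfolding division_subring_def by blast
  qed
  show "- x \<in> \<Inter> F"
  proof
    fix H assume "H \<in> F" then show "- x \<in> H" using F[of H] x unfolding division_subring_def by blast
  qed
  fix y assume y: "y \<in> \<Inter> F"
  show "x * y \<in> \<Inter> F"
  proof
    fix H assume "H \<in> F" then show "x * y \<in> H" using F[of H] x y unfolding division_subring_def by blast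
  qed
  show "x + y \<in> \<Inter> F"
  proof
    fix H assume "H \<in> F" then show "x + y \<in> H" using F[of H] x y unfolding division_subring_def by blast
  qed
qed

lemma gen_div_sub: "division_subring (division_subring_gen X)"
  unfolding division_subring_gen_def by (rule Inter_div) blast

lemma gen_div_incl: "X \<subseteq> division_subring_gen X"
  unfolding division_subring_gen_def by blast

lemma gen_div_least: "division_subring S \<Longrightarrow> X \<subseteq> S \<Longrightarrow> division_subring_gen X \<subseteq> S"
  unfolding division_subring_gen_def by blast

lemma neg_zero_grp: "mult_subgroup (- {0::'a::division_ring})"
  unfolding mult_subgroup_def by auto

lemma Inter_grp:
  assumes F: "\<And>H. H \<in> F \<Longrightarrow> mult_subgroup (H::'a::division_ring set)" and ne: "F \<noteq> {}"
  shows "mult_subgroup (\<Inter> F)"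
  unfolding mult_subgroup_def
proof (intro conjI ballI)
  obtain H0 where "H0 \<in> F" using ne by blast
  then show "\<Inter> F \<subseteq> - {0}" using F[of H0] unfolding mult_subgroup_def by blast
  show "1 \<in> \<Inter> F" using F unfolding mult_subgroup_def by blast
  fix x assume x: "x \<in> \<Inter> F"
  show "inverse x \<in> \<Inter> F"
  proof
    fix H assume "H \<in> F" then show "inverse x \<in> H" using F[of H] x unfolding mult_subgroup_def by blast
  qed
  fix y assume y: "y \<in> \<Inter> F"
  show "x * y \<in> \<Inter> F"
  proof
    fix H assume "H \<in> F" then show "x * y \<in> H" using F[of H] x y unfolding mult_subgroup_def by blast
  qed
qed

lemma gen_grp_sub: assumes X: "X \<subseteq> - {0}" shows "mult_subgroup (subgroup_gen (X::'a::division_ring set))"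
  unfolding subgroup_gen_def
  by (rule Inter_grp) (use X neg_zero_grp in blast)+

lemma gen_grp_incl: "X \<subseteq> subgroup_gen X"
  unfolding subgroup_gen_def by blast

lemma gen_grp_least: "mult_subgroup S \<Longrightarrow> X \<subseteq> S \<Longrightarrow> subgroup_gen X \<subseteq> S"
  unfolding subgroup_gen_def by blast

lemma commutator_nz: "x \<noteq> 0 \<Longrightarrow> y \<noteq> 0 \<Longrightarrow> commutator x y \<noteq> (0::'a::division_ring)"
  unfolding commutator_def by simp

lemma comm_in_derived:
  assumes "mult_subgroup M" "x \<in> M" "y \<in> M" shows "commutator x y \<in> derived M"
  unfolding derived_def by (rule subsetD[OF gen_grp_incl]) (use assms in blast)

lemma derived_sub: assumes "mult_subgroup M" shows "mult_subgroup (derived M)"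
  unfolding derived_def
proof (rule gen_grp_sub)
  have "M \<subseteq> - {0}" using assms unfolding mult_subgroup_def by blast
  then show "{commutator x y |x y. x \<in> M \<and> y \<in> M} \<subseteq> - {0}"
  proof (intro subsetI)
    fix z assume M0: "M \<subseteq> - {0}" and "z \<in> {commutator x y |x y. x \<in> M \<and> y \<in> M}"
    then obtain x y where "z = commutator x y" "x \<in> M" "y \<in> M" by blast
    then have "x \<noteq> 0" "y \<noteq> 0" using M0 by auto
    then show "z \<in> - {0}" using commutator_nz \<open>z = commutator x y\<close> by simp
  qed
qed

lemma mm_inv: "(m::'a::division_ring) \<noteq> 0 \<Longrightarrow> m * (inverse m * z) = z"
  by (simp add: mult.assoc[symmetric])
lemma mm_inv2: "(m::'a::division_ring) \<noteq> 0 \<Longrightarrow> inverse m * (m * z) = z"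
  by (simp add: mult.assoc[symmetric])

lemma conj_mult: "(m::'a::division_ring) \<noteq> 0 \<Longrightarrow> inverse m * (x*y) * m = (inverse m * x * m) * (inverse m * y * m)"
  by (simp add: mult.assoc mm_inv)

lemma conj_inv: "(m::'a::division_ring) \<noteq> 0 \<Longrightarrow> inverse m * inverse x * m = inverse (inverse m * x * m)"
  by (cases "x = 0") (simp_all add: nonzero_inverse_mult_distrib mult.assoc)

lemma conj_gen_div:
  assumes m: "(m::'a::division_ring) \<noteq> 0" and X: "\<forall>x\<in>X. inverse m * x * m \<in> division_subring_gen X"
  shows "\<forall>s \<in> division_subring_gen X. inverse m * s * m \<in> division_subring_gen X"
proof -
  let ?G = "division_subring_gen X"
  have G: "division_subring ?G" by (rule gen_div_sub)
  define T where "T = {s. inverse m * s * m \<in> ?G}"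
  have "division_subring T"
    unfolding division_subring_def
  proof (intro conjI ballI)
    show "0 \<in> T" using G unfolding division_subring_def T_def by simp
    show "1 \<in> T" using G m unfolding division_subring_def T_def by simp
    fix x assume x: "x \<in> T"
    show "- x \<in> T" "inverse x \<in> T"
      using x G conj_inv[OF m, of x] unfolding division_subring_def T_def by auto
    fix y assume y: "y \<in> T"
    show "x + y \<in> T" "x * y \<in> T"
      using x y G conj_mult[OF m, of x y] unfolding division_subring_def T_def
      by (auto simp: distrib_left distrib_right)
  qed
  moreover have "X \<subseteq> T" using X unfolding T_def by auto
  ultimately have "?G \<subseteq> T" by (rule gen_div_least)
  then show ?thesis unfolding T_def by blast
qed

lemma conj_gen_grp:
  assumes m: "(m::'a::division_ring) \<noteq> 0" and X0: "X \<subseteq> - {0}"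
    and X: "\<forall>x\<in>X. inverse m * x * m \<in> subgroup_gen X"
  shows "\<forall>s \<in> subgroup_gen X. inverse m * s * m \<in> subgroup_gen X"
proof -
  let ?G = "subgroup_gen X"
  have G: "mult_subgroup ?G" by (rule gen_grp_sub[OF X0])
  define T where "T = {s. s \<noteq> 0 \<and> inverse m * s * m \<in> ?G}"
  have "mult_subgroup T"
    unfolding mult_subgroup_def
  proof (intro conjI ballI)
    show "T \<subseteq> - {0}" unfolding T_def by auto
    show "1 \<in> T" using G m unfolding mult_subgroup_def T_def by simp
    fix x assume x: "x \<in> T"
    show "inverse x \<in> T"
      using x G conj_inv[OF m, of x] unfolding mult_subgroup_def T_def by auto
    fix y assume y: "y \<in> T"
    show "x * y \<in> T"
      using x y G conj_mult[OF m, of x y] unfolding mult_subgroup_def T_def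
      by auto
  qed
  moreover have "X \<subseteq> T" using X X0 unfolding T_def by auto
  ultimately have "?G \<subseteq> T" by (rule gen_grp_least)
  then show ?thesis unfolding T_def by blast
qed


definition Cen :: "'a::division_ring set \<Rightarrow> 'a set" where
  "Cen Y = {z. \<forall>y\<in>Y. z * y = y * z}"

lemma inv_comm: "(z::'a::division_ring) * y = y * z \<Longrightarrow> inverse z * y = y * inverse z"
proof (cases "z = 0")
  case False
  assume h: "z * y = y * z"
  have "inverse z * y = inverse z * (y * z) * inverse z" using False by (simp add: mult.assoc)
  also have "\<dots> = inverse z * (z * y) * inverse z" using h by simp
  also have "\<dots> = y * inverse z" using False by (simp add: mult.assoc[symmetric])
  finally show ?thesis .
qed simp

lemma cen_div: "division_subring (Cen Y)"
  unfolding division_subring_def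
proof (intro conjI ballI)
  show "0 \<in> Cen Y" "1 \<in> Cen Y" unfolding Cen_def by auto
  fix x assume x: "x \<in> Cen Y"
  show "- x \<in> Cen Y" using x unfolding Cen_def by auto
  show "inverse x \<in> Cen Y" using x inv_comm unfolding Cen_def by blast
  fix y assume y: "y \<in> Cen Y"
  show "x + y \<in> Cen Y" using x y unfolding Cen_def by (auto simp: distrib_left distrib_right)
  show "x * y \<in> Cen Y" unfolding Cen_def
  proof (intro CollectI ballI)
    fix z assume z: "z \<in> Y"
    have "x * y * z = x * (z * y)" using y z unfolding Cen_def by (simp add: mult.assoc)
    also have "\<dots> = z * (x * y)" using x z unfolding Cen_def by (simp add: mult.assoc[symmetric])
    finally show "x * y * z = z * (x * y)" .
  qed
qed

lemma center_Cen: "center = Cen UNIV"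
  unfolding center_def Cen_def by simp

lemma center_div: "division_subring (center::'a::division_ring set)"
  using cen_div center_Cen by metis

lemma gen_abelian:
  assumes X: "abelian_set X" shows "abelian_set (division_subring_gen X)"
proof -
  have "X \<subseteq> Cen X" using X unfolding abelian_set_def Cen_def by blast
  then have G: "division_subring_gen X \<subseteq> Cen X" by (rule gen_div_least[OF cen_div])
  have "X \<subseteq> Cen (division_subring_gen X)"
  proof
    fix x assume x: "x \<in> X"
    show "x \<in> Cen (division_subring_gen X)" unfolding Cen_def
    proof (intro CollectI ballI)
      fix g assume "g \<in> division_subring_gen X"
      then have "g \<in> Cen X" using G by blast
      then show "x * g = g * x" using x unfolding Cen_def by auto
    qed
  qed
  then have "division_subring_gen X \<subseteq> Cen (division_subring_gen X)" by (rule gen_div_least[OF cen_div])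
  then show ?thesis unfolding abelian_set_def Cen_def by blast
qed

lemma ds_diff: "division_subring S \<Longrightarrow> x \<in> S \<Longrightarrow> y \<in> S \<Longrightarrow> x - y \<in> S"
  unfolding division_subring_def by (metis diff_conv_add_uminus)

lemma ds_mult: "division_subring S \<Longrightarrow> x \<in> S \<Longrightarrow> y \<in> S \<Longrightarrow> x * y \<in> S"
  unfolding division_subring_def by blast
lemma ds_add: "division_subring S \<Longrightarrow> x \<in> S \<Longrightarrow> y \<in> S \<Longrightarrow> x + y \<in> S"
  unfolding division_subring_def by blast
lemma ds_inv: "division_subring S \<Longrightarrow> x \<in> S \<Longrightarrow> inverse x \<in> S"
  unfolding division_subring_def by blast
lemma ds_neg: "division_subring S \<Longrightarrow> x \<in> S \<Longrightarrow> - x \<in> S"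
  unfolding division_subring_def by blast
lemma ds_1: "division_subring S \<Longrightarrow> 1 \<in> S"
  unfolding division_subring_def by blast
lemma ds_0: "division_subring S \<Longrightarrow> 0 \<in> S"
  unfolding division_subring_def by blast

lemma cbh_step:
  assumes S: "division_subring S"
    and N: "\<And>x s. x \<noteq> 0 \<Longrightarrow> s \<in> S \<Longrightarrow> x * s * inverse x \<in> S"
    and a: "a \<notin> S" and k: "k \<in> S"
  shows "a * k = k * a"
proof -
  have a0: "a \<noteq> 0" using a ds_0[OF S] by blast
  have a1: "1 + a \<noteq> 0"
  proof
    assume "1 + a = 0" then have "a = - 1" by (simp add: eq_neg_iff_add_eq_0 add.commute)
    then show False using a ds_neg[OF S ds_1[OF S]] by simp
  qed
  define k1 where "k1 = a * k * inverse a"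
  define k2 where "k2 = (1 + a) * k * inverse (1 + a)"
  have k1S: "k1 \<in> S" using N[OF a0 k] k1_def by simp
  have k2S: "k2 \<in> S" using N[OF a1 k] k2_def by simp
  have e1: "a * k = k1 * a" using a0 unfolding k1_def by (simp add: mult.assoc)
  have e2: "(1 + a) * k = k2 * (1 + a)" using a1 unfolding k2_def by (simp add: mult.assoc)
  have "k + k1 * a = k2 + k2 * a" using e1 e2 by (simp add: distrib_left distrib_right)
  then have e3: "k - k2 = (k2 - k1) * a" by (simp add: algebra_simps)
  have "k2 = k1"
  proof (rule ccontr)
    assume ne: "k2 \<noteq> k1"
    then have "k2 - k1 \<noteq> 0" by simp
    then have "a = inverse (k2 - k1) * (k - k2)" using e3 by (simp add: mult.assoc[symmetric])
    moreover have "inverse (k2 - k1) * (k - k2) \<in> S"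
      using S k k1S k2S by (intro ds_mult ds_inv ds_diff) auto
    ultimately show False using a by simp
  qed
  then have "k = k2" using e3 by simp
  then show ?thesis using e1 \<open>k2 = k1\<close> by simp
qed

lemma cbh:
  assumes S: "division_subring S"
    and N: "\<And>x s. x \<noteq> 0 \<Longrightarrow> s \<in> S \<Longrightarrow> x * s * inverse x \<in> S"
    and a: "a \<notin> S"
  shows "S \<subseteq> center"
proof
  fix k assume k: "k \<in> S"
  show "k \<in> center" unfolding center_def
  proof (intro CollectI allI)
    fix y
    show "k * y = y * k"
    proof (cases "y \<in> S")
      case False
      then show ?thesis using cbh_step[OF S N False k] by simp
    next
      case True
      have "a + y \<notin> S"
      proof
        assume "a + y \<in> S"
        then have "(a + y) - y \<in> S" using ds_diff[OF S] True by blast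
        then show False using a by simp
      qed
      then have "(a + y) * k = k * (a + y)" using cbh_step[OF S N _ k] by blast
      moreover have "a * k = k * a" using cbh_step[OF S N a k] .
      ultimately show ?thesis by (simp add: distrib_left distrib_right)
    qed
  qed
qed

lemma conj_comm: "(y::'a::division_ring) \<noteq> 0 \<Longrightarrow> x \<noteq> 0 \<Longrightarrow> inverse y * x * y = x * inverse (commutator y x)"
  unfolding commutator_def by (simp add: nonzero_inverse_mult_distrib mult.assoc mm_inv)

lemma lemP:
  fixes x y :: "'a::division_ring"
  assumes y: "y \<noteq> 0" and h1: "inverse y * x * y = x * \<alpha>" and h2: "inverse y * (1 + x) * y = (1 + x) * \<beta>"
  shows "(\<beta> \<noteq> \<alpha> \<and> x = (1 - \<beta>) * inverse (\<beta> - \<alpha>)) \<or> x * y = y * x"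
proof -
  have "inverse y * (1 + x) * y = 1 + inverse y * x * y" using y by (simp add: distrib_left distrib_right)
  then have "1 + x * \<alpha> = \<beta> + x * \<beta>" using h1 h2 by (simp add: distrib_right)
  then have e: "1 - \<beta> = x * (\<beta> - \<alpha>)" by (simp add: algebra_simps)
  show ?thesis
  proof (cases "\<beta> = \<alpha>")
    case False
    then have "x = (1 - \<beta>) * inverse (\<beta> - \<alpha>)" using e by (simp add: mult.assoc)
    then show ?thesis using False by blast
  next
    case True
    then have "\<alpha> = 1" using e by simp
    then have "inverse y * x * y = x" using h1 by simp
    then have "y * (inverse y * x * y) = y * x" by simp
    then have "x * y = y * x" using y by (simp add: mult.assoc[symmetric])
    then show ?thesis by blast
  qed
qed


lemma msub_M0: "mult_subgroup M \<Longrightarrow> x \<in> M \<Longrightarrow> x \<noteq> 0"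
  unfolding mult_subgroup_def by blast
lemma msub_inv: "mult_subgroup M \<Longrightarrow> x \<in> M \<Longrightarrow> inverse x \<in> M"
  unfolding mult_subgroup_def by blast
lemma msub_mult: "mult_subgroup M \<Longrightarrow> x \<in> M \<Longrightarrow> y \<in> M \<Longrightarrow> x * y \<in> M"
  unfolding mult_subgroup_def by blast

lemma norm_in_M:
  fixes M S :: "'a::division_ring set"
  assumes max: "maximal_subgroup M" and S: "division_subring S"
    and NM: "\<forall>m\<in>M. \<forall>s\<in>S. inverse m * s * m \<in> S"
    and nc: "\<not> S \<subseteq> center" and nu: "S \<noteq> UNIV"
  shows "S - {0} \<subseteq> M"
proof -
  have MS: "mult_subgroup M" using max unfolding maximal_subgroup_def by blast
  define N where "N = {x. x \<noteq> 0 \<and> (\<forall>s\<in>S. inverse x * s * x \<in> S) \<and> (\<forall>s\<in>S. x * s * inverse x \<in> S)}"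
  have NS: "mult_subgroup N" unfolding mult_subgroup_def
  proof (intro conjI ballI)
    show "N \<subseteq> - {0}" unfolding N_def by blast
    show "1 \<in> N" unfolding N_def by simp
    fix x assume x: "x \<in> N"
    show "inverse x \<in> N" using x unfolding N_def by simp
    fix y assume y: "y \<in> N"
    have x0: "x \<noteq> 0" and y0: "y \<noteq> 0" using x y unfolding N_def by auto
    show "x * y \<in> N" unfolding N_def
    proof (intro CollectI conjI ballI)
      show "x * y \<noteq> 0" using x0 y0 by simp
      fix s assume s: "s \<in> S"
      have "inverse (x * y) * s * (x * y) = inverse y * (inverse x * s * x) * y"
        using x0 y0 by (simp add: nonzero_inverse_mult_distrib mult.assoc)
      then show "inverse (x * y) * s * (x * y) \<in> S" using x y s unfolding N_def by simp
      have "x * y * s * inverse (x * y) = x * (y * s * inverse y) * inverse x"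
        using x0 y0 by (simp add: nonzero_inverse_mult_distrib mult.assoc)
      then show "x * y * s * inverse (x * y) \<in> S" using x y s unfolding N_def by simp
    qed
  qed
  have MN: "M \<subseteq> N"
  proof
    fix m assume m: "m \<in> M"
    have "inverse m \<in> M" using msub_inv[OF MS m] .
    then have "\<forall>s\<in>S. m * s * inverse m \<in> S" using NM by (metis inverse_inverse_eq)
    then show "m \<in> N" using NM m msub_M0[OF MS m] unfolding N_def by blast
  qed
  have "N \<noteq> - {0}"
  proof
    assume NU: "N = - {0}"
    obtain a where a: "a \<notin> S" using nu by blast
    have "S \<subseteq> center"
    proof (rule cbh[OF S _ a])
      fix x s assume "x \<noteq> (0::'a)" "s \<in> S"
      then show "x * s * inverse x \<in> S" using NU unfolding N_def by blast
    qed
    then show False using nc by blast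
  qed
  then have NM': "N = M" using max NS MN unfolding maximal_subgroup_def by blast
  show ?thesis
  proof
    fix s0 assume s0: "s0 \<in> S - {0}"
    have "s0 \<in> N" unfolding N_def
    proof (intro CollectI conjI ballI)
      show "s0 \<noteq> 0" using s0 by blast
      fix s assume "s \<in> S"
      then show "inverse s0 * s * s0 \<in> S" "s0 * s * inverse s0 \<in> S"
        using s0 S by (auto intro!: ds_mult ds_inv)
    qed
    then show "s0 \<in> M" using NM' by simp
  qed
qed

lemma conj_commutator:
  "(m::'a::division_ring) \<noteq> 0 \<Longrightarrow> inverse m * commutator x y * m = commutator (inverse m * x * m) (inverse m * y * m)"
  unfolding commutator_def by (simp add: conj_mult conj_inv)

lemma cen_conj:
  fixes m :: "'a::division_ring"
  assumes m: "m \<noteq> 0" and K: "\<forall>k\<in>K. m * k * inverse m \<in> K" and z: "z \<in> Cen K"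
  shows "inverse m * z * m \<in> Cen K"
  unfolding Cen_def
proof (intro CollectI ballI)
  fix k assume k: "k \<in> K"
  define k' where "k' = m * k * inverse m"
  have k'K: "k' \<in> K" using K k k'_def by simp
  have zk: "z * k' = k' * z" using z k'K unfolding Cen_def by blast
  have kk: "k = inverse m * k' * m" using m unfolding k'_def by (simp add: mult.assoc mm_inv2)
  have "inverse m * z * m * k = inverse m * (z * k') * m" using m unfolding kk by (simp add: mult.assoc mm_inv)
  also have "\<dots> = inverse m * (k' * z) * m" using zk by simp
  also have "\<dots> = k * (inverse m * z * m)" using m unfolding kk by (simp add: mult.assoc mm_inv)
  finally show "inverse m * z * m * k = k * (inverse m * z * m)" .
qed

lemma lemQ:
  fixes x y :: "'a::division_ring"
  assumes T: "division_subring T" and y: "y \<noteq> 0" and x: "x \<noteq> 0" and x1: "1 + x \<noteq> 0"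
    and c1: "commutator y x \<in> T" and c2: "commutator y (1 + x) \<in> T"
    and xT: "x \<in> T \<Longrightarrow> x * y = y * x"
  shows "x * y = y * x"
proof -
  have h1: "inverse y * x * y = x * inverse (commutator y x)" using conj_comm[OF y x] .
  have h2: "inverse y * (1 + x) * y = (1 + x) * inverse (commutator y (1 + x))" using conj_comm[OF y x1] .
  from lemP[OF y h1 h2] show ?thesis
  proof
    assume "inverse (commutator y (1 + x)) \<noteq> inverse (commutator y x) \<and>
      x = (1 - inverse (commutator y (1 + x))) * inverse (inverse (commutator y (1 + x)) - inverse (commutator y x))"
    then have "x = (1 - inverse (commutator y (1 + x))) * inverse (inverse (commutator y (1 + x)) - inverse (commutator y x))" by blast
    moreover have "(1 - inverse (commutator y (1 + x))) * inverse (inverse (commutator y (1 + x)) - inverse (commutator y x)) \<in> T"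
      by (intro ds_mult[OF T] ds_inv[OF T] ds_diff[OF T] ds_1[OF T] c1 c2)
    ultimately have "x \<in> T" by simp
    then show ?thesis using xT by blast
  qed
qed

lemma sq_alg:
  fixes s t c :: "'a::division_ring"
  assumes sc: "s * c = c * s" and h1: "s * s = t * c" and h2: "(s + 1) * (s + 1) = (t + 1) * (c + 1)"
  shows "s = c"
proof -
  have "s * s + s + s + 1 = t * c + t + c + 1" using h2 by (simp add: algebra_simps)
  then have e: "s + s = t + c" using h1 by simp
  have "(s - c) * (s - c) = s * s - (s + s) * c + c * c" using sc by (simp add: algebra_simps)
  also have "\<dots> = t * c - (t + c) * c + c * c" using e h1 by simp
  also have "\<dots> = 0" by (simp add: algebra_simps)
  finally have "(s - c) * (s - c) = 0" .
  then show ?thesis by simp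
qed


lemma center_comm: "z \<in> center \<Longrightarrow> z * y = y * z"
  unfolding center_def by blast

lemma conj_center: "z \<in> center \<Longrightarrow> m \<noteq> 0 \<Longrightarrow> inverse m * z * m = (z::'a::division_ring)"
  using center_comm[of z m] by (simp add: mult.assoc mm_inv2)

lemma ab_center_un:
  assumes MM: "abelian_set X" shows "abelian_set (center \<union> X)"
  unfolding abelian_set_def
proof (intro ballI)
  fix x y assume x: "x \<in> center \<union> X" and y: "y \<in> center \<union> X"
  show "x * y = y * x"
  proof (cases "x \<in> center")
    case True then show ?thesis using center_comm by blast
  next
    case False
    then have xM: "x \<in> X" using x by blast
    show ?thesis
    proof (cases "y \<in> center")
      case True then show ?thesis using center_comm by metis
    next
      case False then show ?thesis using xM y MM unfolding abelian_set_def by blast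
    qed
  qed
qed

theorem theorem2p3:
  fixes M :: "'a::division_ring set"
  assumes noncomm: "\<exists>a b :: 'a. a * b \<noteq> b * a"
    and max: "maximal_subgroup M"
    and irr: "irreducible_subgroup M"
    and ls: "locally_solvable M"
    and meta: "metabelian M"
  shows "\<exists>A. (\<forall>B. maximal_abelian_normal B M \<longleftrightarrow> B = A)
           \<and> center - {0} \<subset> A \<and> derived M \<subseteq> A
           \<and> maximal_subfield (A \<union> {0})"
proof -
  have MS: "mult_subgroup M" using max unfolding maximal_subgroup_def by blast
  obtain a0 b0 :: 'a where ab0: "a0 * b0 \<noteq> b0 * a0" using noncomm by blast
  have nabU: "\<not> abelian_set (S::'a set)" if "S = UNIV" for S
    using ab0 that unfolding abelian_set_def by blast
  have genU: "division_subring_gen (center \<union> M) = UNIV" using irr unfolding irreducible_subgroup_def .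
  have DS: "mult_subgroup (derived M)" using derived_sub[OF MS] .
  have comm_der: "commutator x y \<in> derived M" if "x \<in> M" "y \<in> M" for x y
    using comm_in_derived[OF MS that] .
  have conjM: "inverse m * x * m \<in> M" if "m \<in> M" "x \<in> M" for m x
    using MS that by (intro msub_mult msub_inv)
  have "\<not> derived M \<subseteq> center"
  proof
    assume Dc: "derived M \<subseteq> center"
    have key: "1 + x \<in> M" if x: "x \<in> M" "x \<notin> center" for x
    proof -
      define L where "L = division_subring_gen (center \<union> {x})"
      have Ld: "division_subring L" unfolding L_def by (rule gen_div_sub)
      have "abelian_set (center \<union> {x})" unfolding abelian_set_def center_def by auto
      then have Lab: "abelian_set L" unfolding L_def by (rule gen_abelian)
      have xL: "x \<in> L" unfolding L_def using gen_div_incl by blast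
      have cL: "center \<subseteq> L" unfolding L_def using gen_div_incl by blast
      have NL: "\<forall>m\<in>M. \<forall>s\<in>L. inverse m * s * m \<in> L"
      proof
        fix m assume m: "m \<in> M"
        have m0: "m \<noteq> 0" using msub_M0[OF MS m] .
        show "\<forall>s\<in>L. inverse m * s * m \<in> L" unfolding L_def
        proof (rule conj_gen_div[OF m0], rule ballI)
          fix z assume z: "z \<in> center \<union> {x}"
          show "inverse m * z * m \<in> division_subring_gen (center \<union> {x})"
          proof (cases "z \<in> center")
            case True
            then show ?thesis using conj_center[OF True m0] cL True unfolding L_def by auto
          next
            case False
            then have zx: "z = x" using z by blast
            have x0: "x \<noteq> 0" using msub_M0[OF MS x(1)] .
            have "commutator m x \<in> L" using comm_der[OF m x(1)] Dc cL by blast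
            then have "x * inverse (commutator m x) \<in> L" using Ld xL by (intro ds_mult ds_inv)
            then show ?thesis using conj_comm[OF m0 x0] zx unfolding L_def by simp
          qed
        qed
      qed
      have "L - {0} \<subseteq> M"
        by (rule norm_in_M[OF max Ld NL]) (use xL x(2) Lab nabU in blast)+
      moreover have "1 + x \<in> L" using Ld xL by (intro ds_add ds_1)
      moreover have "1 + x \<noteq> 0"
      proof
        assume "1 + x = 0" then have "x = - 1" by (simp add: eq_neg_iff_add_eq_0 add.commute)
        then show False using x(2) center_div ds_neg ds_1 by metis
      qed
      ultimately show ?thesis by blast
    qed
    have "abelian_set M" unfolding abelian_set_def
    proof (intro ballI)
      fix y x assume y: "y \<in> M" and x: "x \<in> M"
      show "y * x = x * y"
      proof (cases "x \<in> center")
        case True then show ?thesis using center_comm by metis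
      next
        case False
        have x1: "1 + x \<in> M" using key[OF x False] .
        have "x * y = y * x"
          by (rule lemQ[OF center_div msub_M0[OF MS y] msub_M0[OF MS x] msub_M0[OF MS x1]])
             (use comm_der[OF y x] comm_der[OF y x1] Dc False in blast)+
        then show ?thesis by simp
      qed
    qed
    then have "abelian_set (center \<union> M)" by (rule ab_center_un)
    then have "abelian_set (division_subring_gen (center \<union> M))" by (rule gen_abelian)
    then show False using genU nabU by simp
  qed
  then obtain d where dD: "d \<in> derived M" and dc: "d \<notin> center" by blast
  define K where "K = division_subring_gen (center \<union> derived M)"
  have Kd: "division_subring K" unfolding K_def by (rule gen_div_sub)
  have "abelian_set (center \<union> derived M)" using meta unfolding metabelian_def by (rule ab_center_un)
  then have Kab: "abelian_set K" unfolding K_def by (rule gen_abelian)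
  have DK: "derived M \<subseteq> K" unfolding K_def using gen_div_incl by blast
  have cK: "center \<subseteq> K" unfolding K_def using gen_div_incl by blast
  have D0: "derived M \<subseteq> - {0}" using DS unfolding mult_subgroup_def by blast
  have conjD: "inverse m * z * m \<in> derived M" if m: "m \<in> M" and z: "z \<in> derived M" for m z
  proof -
    have m0: "m \<noteq> 0" using msub_M0[OF MS m] .
    have "{commutator x y |x y. x \<in> M \<and> y \<in> M} \<subseteq> derived M"
      unfolding derived_def by (rule gen_grp_incl)
    then have C0: "{commutator x y |x y. x \<in> M \<and> y \<in> M} \<subseteq> - {0}"
      using D0 by (rule order_trans)
    have "\<forall>s\<in>subgroup_gen {commutator x y |x y. x \<in> M \<and> y \<in> M}.
        inverse m * s * m \<in> subgroup_gen {commutator x y |x y. x \<in> M \<and> y \<in> M}"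
    proof (rule conj_gen_grp[OF m0 C0], rule ballI)
      fix c assume "c \<in> {commutator x y |x y. x \<in> M \<and> y \<in> M}"
      then obtain x y where c: "c = commutator x y" "x \<in> M" "y \<in> M" by blast
      have "inverse m * c * m = commutator (inverse m * x * m) (inverse m * y * m)"
        using conj_commutator[OF m0] c by simp
      then show "inverse m * c * m \<in> subgroup_gen {commutator x y |x y. x \<in> M \<and> y \<in> M}"
        using comm_der[OF conjM[OF m c(2)] conjM[OF m c(3)]] unfolding derived_def by simp
    qed
    then show ?thesis using z unfolding derived_def by blast
  qed
  have NK: "\<forall>m\<in>M. \<forall>s\<in>K. inverse m * s * m \<in> K"
  proof
    fix m assume m: "m \<in> M"
    have m0: "m \<noteq> 0" using msub_M0[OF MS m] .
    show "\<forall>s\<in>K. inverse m * s * m \<in> K" unfolding K_def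
    proof (rule conj_gen_div[OF m0], rule ballI)
      fix z assume z: "z \<in> center \<union> derived M"
      show "inverse m * z * m \<in> division_subring_gen (center \<union> derived M)"
      proof (cases "z \<in> center")
        case True
        then show ?thesis using conj_center[OF True m0] cK True unfolding K_def by auto
      next
        case False
        then show ?thesis using conjD[OF m] z DK unfolding K_def by blast
      qed
    qed
  qed
  have dK: "d \<in> K" using dD DK by blast
  have KM: "K - {0} \<subseteq> M"
    by (rule norm_in_M[OF max Kd NK]) (use dK dc Kab nabU in blast)+
  define C where "C = Cen K"
  have Cd: "division_subring C" unfolding C_def by (rule cen_div)
  have KC: "K \<subseteq> C" using Kab unfolding C_def Cen_def abelian_set_def by blast
  have NC: "\<forall>m\<in>M. \<forall>s\<in>C. inverse m * s * m \<in> C"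
  proof (intro ballI)
    fix m s assume m: "m \<in> M" and s: "s \<in> C"
    have m0: "m \<noteq> 0" using msub_M0[OF MS m] .
    have "\<forall>k\<in>K. m * k * inverse m \<in> K"
      using NK msub_inv[OF MS m] by (metis inverse_inverse_eq)
    then show "inverse m * s * m \<in> C" using cen_conj[OF m0] s unfolding C_def by blast
  qed
  have dC: "d \<in> C" using dK KC by blast
  have CU: "C \<noteq> UNIV"
  proof
    assume "C = UNIV"
    then have "\<forall>y. y \<in> C" by blast
    then have "\<forall>y. y * d = d * y" using dK unfolding C_def Cen_def by blast
    then have "d \<in> center" unfolding center_def by simp
    then show False using dc by blast
  qed
  have CM: "C - {0} \<subseteq> M"
    by (rule norm_in_M[OF max Cd NC]) (use dC dc CU in blast)+
  have Cab: "abelian_set C" unfolding abelian_set_def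
  proof (intro ballI)
    fix y x assume y: "y \<in> C" and x: "x \<in> C"
    show "y * x = x * y"
    proof (cases "y = 0 \<or> x = 0 \<or> 1 + x = 0")
      case True
      then show ?thesis
      proof (elim disjE)
        assume "1 + x = 0" then have "x = - 1" by (simp add: eq_neg_iff_add_eq_0 add.commute)
        then show ?thesis by simp
      qed simp_all
    next
      case False
      then have y0: "y \<noteq> 0" and x0: "x \<noteq> 0" and x10: "1 + x \<noteq> 0" by auto
      have yM: "y \<in> M" using CM y y0 by blast
      have xM: "x \<in> M" using CM x x0 by blast
      have x1M: "1 + x \<in> M" using CM x10 Cd x by (blast intro: ds_add ds_1)
      have "x * y = y * x"
      proof (rule lemQ[OF Kd y0 x0 x10])
        show "commutator y x \<in> K" using comm_der[OF yM xM] DK by blast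
        show "commutator y (1 + x) \<in> K" using comm_der[OF yM x1M] DK by blast
        assume "x \<in> K" then show "x * y = y * x" using y unfolding C_def Cen_def by auto
      qed
      then show ?thesis by simp
    qed
  qed
  have Csf: "subfield C" unfolding subfield_def using Cd Cab by blast
  have Cmax: "maximal_subfield C" unfolding maximal_subfield_def
  proof (intro conjI allI impI)
    show "subfield C" by (rule Csf)
    fix L assume L: "subfield L \<and> C \<subseteq> L"
    have "L \<subseteq> C" unfolding C_def Cen_def
    proof
      fix l assume l: "l \<in> L"
      have "\<forall>k\<in>K. l * k = k * l" using L l KC unfolding subfield_def abelian_set_def by blast
      then show "l \<in> {z. \<forall>y\<in>K. z * y = y * z}" by blast
    qed
    then show "L = C" using L by blast
  qed
  define A where "A = C - {0}"
  have AC: "A \<union> {0} = C" unfolding A_def using ds_0[OF Cd] by blast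
  have Anorm: "abelian_normal A M"
    unfolding abelian_normal_def normal_subgroup_def
  proof (intro conjI ballI)
    show "mult_subgroup A" unfolding mult_subgroup_def A_def
      using Cd by (auto intro: ds_mult ds_inv ds_1)
    show "A \<subseteq> M" using CM unfolding A_def .
    show "abelian_set A" using Cab unfolding A_def abelian_set_def by blast
    fix m n assume m: "m \<in> M" and n: "n \<in> A"
    then show "inverse m * n * m \<in> A" using NC msub_M0[OF MS m] unfolding A_def by auto
  qed
  have Bsub: "B \<subseteq> A" if B: "abelian_normal B M" for B
  proof
    fix b assume b: "b \<in> B"
    have BS: "mult_subgroup B" and BM: "B \<subseteq> M" and Bn: "\<forall>m\<in>M. \<forall>n\<in>B. inverse m * n * m \<in> B"
      and Bab: "abelian_set B"
      using B unfolding abelian_normal_def normal_subgroup_def by auto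
    have bM: "b \<in> M" using b BM by blast
    have b0: "b \<noteq> 0" using msub_M0[OF BS b] .
    have sq: "(inverse b * c * b) * (inverse b * c * b) = (inverse b * (inverse b * c * b) * b) * c"
      if c: "c \<in> C" "c \<noteq> 0" for c
    proof -
      have cM: "c \<in> M" using CM c by blast
      define s where "s = inverse b * c * b"
      define t where "t = inverse b * s * b"
      have sC: "s \<in> C" using NC bM c unfolding s_def by blast
      have tC: "t \<in> C" using NC bM sC unfolding t_def by blast
      have s0: "s \<noteq> 0" using b0 c unfolding s_def by simp
      define e where "e = commutator b c"
      have "inverse c * b * c \<in> B" using Bn cM b by blast
      then have "inverse b * (inverse c * b * c) \<in> B" by (rule msub_mult[OF BS msub_inv[OF BS b]])
      then have eB: "e \<in> B" unfolding e_def commutator_def by (simp add: mult.assoc)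
      have eb: "inverse b * e * b = e"
      proof -
        have "e * b = b * e" using Bab eB b unfolding abelian_set_def by blast
        then show ?thesis using b0 by (simp add: mult.assoc mm_inv2)
      qed
      have "e = inverse b * inverse c * b * c" unfolding e_def commutator_def by simp
      also have "\<dots> = inverse s * c" using conj_inv[OF b0, of c] unfolding s_def by (simp add: mult.assoc)
      finally have es: "e = inverse s * c" .
      have eC: "e \<in> C" unfolding es by (rule ds_mult[OF Cd ds_inv[OF Cd sC] c(1)])
      have c_se: "c = s * e" using es s0 by (simp add: mult.assoc[symmetric])
      have "s = inverse b * (s * e) * b" using c_se unfolding s_def by simp
      also have "\<dots> = t * e" using conj_mult[OF b0, of s e] eb unfolding t_def by simp
      finally have s_te: "s = t * e" .
      have "s * s = t * (e * s)" using s_te by (simp add: mult.assoc)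
      also have "e * s = s * e" using Cab eC sC unfolding abelian_set_def by blast
      finally have "s * s = t * c" using c_se by (simp add: mult.assoc)
      then show ?thesis unfolding t_def s_def .
    qed
    have bc: "c * b = b * c" if c: "c \<in> C" for c
    proof (cases "c = 0 \<or> c + 1 = 0")
      case True
      then show ?thesis
      proof
        assume "c + 1 = 0" then have "c = - 1" by (simp add: eq_neg_iff_add_eq_0)
        then show ?thesis by simp
      qed simp
    next
      case False
      have c1C: "c + 1 \<in> C" using Cd c by (intro ds_add ds_1)
      define s where "s = inverse b * c * b"
      define t where "t = inverse b * s * b"
      have sC: "s \<in> C" using NC bM c unfolding s_def by blast
      have e1: "inverse b * (c + 1) * b = s + 1" unfolding s_def using b0 by (simp add: algebra_simps)
      have e2: "inverse b * (s + 1) * b = t + 1" unfolding t_def using b0 by (simp add: algebra_simps)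
      have h1: "s * s = t * c" using sq[OF c] False unfolding s_def t_def by simp
      have h2: "(s + 1) * (s + 1) = (t + 1) * (c + 1)" using sq[OF c1C] False e1 e2 by simp
      have sc: "s * c = c * s" using Cab sC c unfolding abelian_set_def by blast
      have "s = c" by (rule sq_alg[OF sc h1 h2])
      then have "inverse b * c * b = c" unfolding s_def .
      then have "b * (inverse b * c * b) = b * c" by simp
      then show ?thesis using b0 by (simp add: mult.assoc[symmetric])
    qed
    have "b \<in> C" unfolding C_def Cen_def
    proof (intro CollectI ballI)
      fix k assume "k \<in> K"
      then have "k \<in> C" using KC by blast
      then show "b * k = k * b" using bc by simp
    qed
    then show "b \<in> A" unfolding A_def using b0 by blast
  qed
  show ?thesis
  proof (intro exI conjI allI)
    fix B
    show "maximal_abelian_normal B M \<longleftrightarrow> B = A"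
    proof
      assume "maximal_abelian_normal B M"
      then show "B = A" using Bsub Anorm unfolding maximal_abelian_normal_def by blast
    next
      assume "B = A"
      then show "maximal_abelian_normal B M"
        unfolding maximal_abelian_normal_def using Anorm Bsub by blast
    qed
  next
    show "center - {0} \<subset> A" unfolding A_def using cK KC dC dc D0 dD by blast
    show "derived M \<subseteq> A" unfolding A_def using DK KC D0 by blast
    show "maximal_subfield (A \<union> {0})" using AC Cmax by simp
  qed
qed

end
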